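(* Let $f_{s_1d}, f_{s_1r}, f_{rd}, g_{rd}^{s_1}, g_{s_1d}^{r}\in[0,1]$ satisfy $0\le g_{s_1d}^{r}\le f_{s_1d}$, $0\le g_{rd}^{s_1}< f_{rd}$, set $T_1=(1-f_{s_1d})f_{s_1r}$ and assume $T_1>0$. For $\alpha\in[0,1]$ define $$\mu_1^{\mathrm{DBC}}(\alpha)=(1-\alpha)(f_{s_1d}+T_1)+\alpha\,g_{s_1d}^{r},\qquad \mu_{u_1}^{\mathrm{DBC}}(\alpha)=\frac{\alpha f_{rd}}{(1-\alpha)T_1+\alpha f_{rd}-\alpha\,g_{rd}^{s_1}}\,\mu_1^{\mathrm{DBC}}(\alpha).$$ If $$f_{rd}-g_{rd}^{s_1}\le \frac{(T_1+g_{rd}^{s_1})^2(f_{s_1d}+T_1)}{T_1(f_{s_1d}+T_1-g_{s_1d}^{r})}-(T_1+2g_{rd}^{s_1}),$$ then $$\max_{0\le\alpha\le 1}\min\{\mu_1^{\mathrm{DBC}}(\alpha),\mu_{u_1}^{\mathrm{DBC}}(\alpha)\}=\Big(1-\frac{T_1}{T_1+g_{rd}^{s_1}}\Big)(f_{s_1d}+T_1)+\frac{T_1}{T_1+g_{rd}^{s_1}}\,g_{s_1d}^{r},$$ attained at $\alpha^*=T_1/(T_1+g_{rd}^{s_1})$.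
   Context: $f_{mn}$ denotes the probability that link $(m,n)$ is not in outage and $g_{mn}^{I}$ the probability that it is not in outage under simultaneous interference from node $I$ (so $g_{mn}^I\le f_{mn}$). This is the optimization of the maximal stable throughput of a single source $s_1$ in the decision-based cooperative scheme over the probability $\alpha$ that the relay (without sensing) transmits in a slot. *)

theory Defs
  imports Complex_Main
begin

definition T1 :: "real \<Rightarrow> real \<Rightarrow> real" where
  "T1 fs1d fs1r = (1 - fs1d) * fs1r"

definition mu1_DBC :: "real \<Rightarrow> real \<Rightarrow> real \<Rightarrow> real \<Rightarrow> real" where
  "mu1_DBC fs1d fs1r gs1d_r \<alpha> = (1 - \<alpha>) * (fs1d + T1 fs1d fs1r) + \<alpha> * gs1d_r"

definition muu1_DBC :: "real \<Rightarrow> real \<Rightarrow> real \<Rightarrow> real \<Rightarrow> real \<Rightarrow> real \<Rightarrow> real" where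
  "muu1_DBC fs1d fs1r frd grd_s1 gs1d_r \<alpha> =
     (\<alpha> * frd / ((1 - \<alpha>) * T1 fs1d fs1r + \<alpha> * frd - \<alpha> * grd_s1)) * mu1_DBC fs1d fs1r gs1d_r \<alpha>"

end

theory Submission
  imports Defs
begin

lemma key:
  fixes T g F G D al :: real
  assumes T: "T > 0" and g: "g \<ge> 0" and FG: "F \<ge> G" and D: "D > 0"
    and al: "al \<ge> 0" "al * (T+g) \<le> T"
    and cond: "T*(F-G)*(D+T+2*g) \<le> (T+g)^2*F"
  shows "(T+g)*(al*(D+g)*((1-al)*F+al*G)) \<le> ((T+g)*F - T*(F-G))*((1-al)*T+al*D)"
proof -
  define s where "s = T+g"
  have s: "s > 0" using T g s_def by simp
  define K where "K = (s*F - T*(F-G))*(D-T) - (D+g)*(s*F - 2*T*(F-G))"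
  have K: "K \<le> 0" using cond unfolding K_def s_def by (simp add: algebra_simps power2_eq_square)
  have id: "s*(((s*F - T*(F-G))*((1-al)*T+al*D)) - s*(al*(D+g)*((1-al)*F+al*G)))
        = K*(s*al - T) + (D+g)*(F-G)*(s*al-T)^2"
    unfolding K_def s_def by (simp add: algebra_simps power2_eq_square)
  have "K*(s*al - T) \<ge> 0" proof -
    have "s*al - T \<le> 0" using al s_def by (simp add: algebra_simps)
    thus ?thesis using K by (simp add: mult_nonpos_nonpos)
  qed
  moreover have "(D+g)*(F-G)*(s*al-T)^2 \<ge> 0" using D g FG by simp
  ultimately have "s*(((s*F - T*(F-G))*((1-al)*T+al*D)) - s*(al*(D+g)*((1-al)*F+al*G))) \<ge> 0"
    using id by linarith
  hence "((s*F - T*(F-G))*((1-al)*T+al*D)) - s*(al*(D+g)*((1-al)*F+al*G)) \<ge> 0"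
    using s by (simp add: zero_le_mult_iff)
  thus ?thesis unfolding s_def by simp
qed

theorem lemma2:
  fixes fs1d fs1r frd grd_s1 gs1d_r :: real
  assumes "fs1d \<in> {0..1}" "fs1r \<in> {0..1}" "frd \<in> {0..1}" "grd_s1 \<in> {0..1}" "gs1d_r \<in> {0..1}"
    and "0 \<le> gs1d_r" "gs1d_r \<le> fs1d"
    and "0 \<le> grd_s1" "grd_s1 < frd"
    and "T1 fs1d fs1r > 0"
    and "frd - grd_s1 \<le>
           (T1 fs1d fs1r + grd_s1)^2 * (fs1d + T1 fs1d fs1r)
             / (T1 fs1d fs1r * (fs1d + T1 fs1d fs1r - gs1d_r))
           - (T1 fs1d fs1r + 2 * grd_s1)"
  shows "let a = T1 fs1d fs1r / (T1 fs1d fs1r + grd_s1);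
             V = (1 - a) * (fs1d + T1 fs1d fs1r) + a * gs1d_r;
             h = (\<lambda>\<alpha>. min (mu1_DBC fs1d fs1r gs1d_r \<alpha>) (muu1_DBC fs1d fs1r frd grd_s1 gs1d_r \<alpha>))
         in a \<in> {0..1} \<and> h a = V \<and> (\<forall>\<alpha>\<in>{0..1}. h \<alpha> \<le> V)"
proof -
  define T where "T = T1 fs1d fs1r"
  define g where "g = grd_s1"
  define F where "F = fs1d + T"
  define G where "G = gs1d_r"
  define D where "D = frd - g"
  define a where "a = T / (T + g)"
  define V where "V = (1 - a) * F + a * G"
  have T: "T > 0" using assms T_def by simp
  have g: "g \<ge> 0" using assms g_def by simp
  have D: "D > 0" using assms D_def g_def by simp
  have s: "T + g > 0" using T g by simp
  have FG: "F \<ge> G" using assms F_def G_def T by simp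
  have cond0: "D \<le> (T+g)^2*F/(T*(F-G)) - (T+2*g)"
    using assms(11) unfolding T_def[symmetric] D_def g_def F_def G_def by simp
  have FG': "F > G"
  proof (rule ccontr)
    assume "\<not> F > G" hence "F = G" using FG by simp
    hence "D \<le> -(T+2*g)" using cond0 by simp
    thus False using D T g by simp
  qed
  have cond: "T*(F-G)*(D+T+2*g) \<le> (T+g)^2*F"
  proof -
    have p: "T*(F-G) > 0" using T FG' by simp
    have "D + (T+2*g) \<le> (T+g)^2*F/(T*(F-G))" using cond0 by simp
    hence "(D + (T+2*g))*(T*(F-G)) \<le> (T+g)^2*F" using p by (simp add: pos_le_divide_eq)
    thus ?thesis by (simp add: algebra_simps)
  qed
  have a01: "a \<in> {0..1}" using T g s unfolding a_def by (auto simp: divide_simps)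
  have aS: "a * (T+g) = T" unfolding a_def using s by simp
  have mu1: "mu1_DBC fs1d fs1r gs1d_r x = (1 - x) * F + x * G" for x
    unfolding mu1_DBC_def F_def G_def T_def by simp
  have muu1: "muu1_DBC fs1d fs1r frd grd_s1 gs1d_r x = (x * (D+g) / ((1 - x) * T + x * D)) * ((1 - x) * F + x * G)" for x
    unfolding muu1_DBC_def mu1 D_def g_def T_def by (simp add: algebra_simps)
  have den: "(1 - x) * T + x * D > 0" if "x \<in> {0..1}" for x
  proof (cases "x = 0")
    case True then show ?thesis using T by simp
  next
    case False
    hence "x * D > 0" using that D by simp
    moreover have "(1-x)*T \<ge> 0" using that T by simp
    ultimately show ?thesis by linarith
  qed
  have dena: "(1 - a) * T + a * D = a * (D+g)"
    using aS by (simp add: algebra_simps)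
  have apos: "a > 0" unfolding a_def using T s by simp
  have ha: "muu1_DBC fs1d fs1r frd grd_s1 gs1d_r a = V"
    unfolding muu1 dena V_def using apos D g by simp
  have hle: "min (mu1_DBC fs1d fs1r gs1d_r x) (muu1_DBC fs1d fs1r frd grd_s1 gs1d_r x) \<le> V"
    if x: "x \<in> {0..1}" for x
  proof (cases "x \<le> a")
    case False
    have "(1 - x) * F + x * G \<le> V" unfolding V_def using False FG
      using mult_right_mono[of a x "F-G"] by (simp add: algebra_simps)
    thus ?thesis unfolding mu1 by simp
  next
    case True
    have xs: "x * (T+g) \<le> T" using True aS s by (metis mult_right_mono less_le_not_le)
    have k: "(T+g)*(x*(D+g)*((1-x)*F+x*G)) \<le> ((T+g)*F - T*(F-G))*((1-x)*T+x*D)"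
      using key[OF T g FG D _ xs cond] x by simp
    have "(T+g) * V = (T+g)*F - (a*(T+g))*(F-G)" unfolding V_def by (simp add: algebra_simps)
    hence eqV: "(T+g)*F - T*(F-G) = (T+g) * V" using aS by simp
    have "(T+g)*(x*(D+g)*((1-x)*F+x*G)) \<le> ((T+g)*V)*((1-x)*T+x*D)" using k unfolding eqV .
    hence "(T+g)*(x*(D+g)*((1-x)*F+x*G)) \<le> (T+g)*(V*((1-x)*T+x*D))" by (simp only: mult.assoc)
    hence "x*(D+g)*((1-x)*F+x*G) \<le> V*((1-x)*T+x*D)" using s by simp
    hence "x*(D+g)*((1-x)*F+x*G) / ((1 - x) * T + x * D) \<le> V"
      using den[OF x] by (simp add: pos_divide_le_eq)
    hence "(x * (D+g) / ((1 - x) * T + x * D)) * ((1 - x) * F + x * G) \<le> V"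
      by (simp add: times_divide_eq_left)
    thus ?thesis unfolding muu1 by simp
  qed
  have "min (mu1_DBC fs1d fs1r gs1d_r a) (muu1_DBC fs1d fs1r frd grd_s1 gs1d_r a) = V"
    using ha mu1[of a] V_def by simp
  thus ?thesis using a01 hle unfolding Let_def a_def V_def F_def G_def T_def g_def
    by simp
qed

end
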